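(* Let $u \in W$ be rational with $u \neq w_0$. Then there exists a simple root $\alpha$ such that $u^{-1}(\alpha) > 0$ and $u(\alpha) < 0$.
   Context: $W$ is the Weyl group of a root system $\Pi$ with simple roots $\Delta$, positive roots $\Pi_+$, longest element $w_0$. $\gamma>0$ (resp. $<0$) means $\gamma$ is a positive (resp. negative) root. $\alpha\le\beta$ iff $\beta-\alpha$ is a nonnegative integer combination of simple roots. For $A\subseteq\Pi_+$, $\mathrm{Adj}(A) = \{\alpha\in\Pi_+ : \exists\beta\in A,\ \alpha\le\beta\}$. For $u\in W$: $\nu^0(u) = u(\Pi_+)\cap\Pi_+$, $\nu^k(u) = u(\mathrm{Adj}\,\nu^{k-1}(u))\cap\Pi_+$, eventually constant with value $\nu(u)$; $u$ is rational iff $\nu(u) = \emptyset$. *)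

theory Defs
  imports "HOL-Analysis.Analysis"
begin

definition refl :: "'a::real_inner \<Rightarrow> 'a \<Rightarrow> 'a" where
  "refl a x = x - (2 * (x \<bullet> a) / (a \<bullet> a)) *\<^sub>R a"

definition root_system :: "'a::euclidean_space set \<Rightarrow> bool" where
  "root_system R \<longleftrightarrow> finite R \<and> 0 \<notin> R
     \<and> (\<forall>a\<in>R. refl a ` R \<subseteq> R)
     \<and> (\<forall>a\<in>R. \<forall>b\<in>R. 2 * (b \<bullet> a) / (a \<bullet> a) \<in> \<int>)
     \<and> (\<forall>a\<in>R. \<forall>c::real. c *\<^sub>R a \<in> R \<longrightarrow> c = 1 \<or> c = -1)"

definition nonneg_int_comb :: "'a::real_vector set \<Rightarrow> 'a \<Rightarrow> bool" where
  "nonneg_int_comb D x \<longleftrightarrow> (\<exists>c. (\<forall>d\<in>D. c d \<in> \<nat>) \<and> x = (\<Sum>d\<in>D. c d *\<^sub>R d))"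

definition is_base :: "'a::euclidean_space set \<Rightarrow> 'a set \<Rightarrow> bool" where
  "is_base R D \<longleftrightarrow> D \<subseteq> R \<and> independent D
     \<and> (\<forall>b\<in>R. nonneg_int_comb D b \<or> nonneg_int_comb D (- b))"

definition pos_roots :: "'a::euclidean_space set \<Rightarrow> 'a set \<Rightarrow> 'a set" where
  "pos_roots R D = {b\<in>R. nonneg_int_comb D b}"

definition root_le :: "'a::euclidean_space set \<Rightarrow> 'a \<Rightarrow> 'a \<Rightarrow> bool" where
  "root_le D a b \<longleftrightarrow> nonneg_int_comb D (b - a)"

definition Adj :: "'a::euclidean_space set \<Rightarrow> 'a set \<Rightarrow> 'a set \<Rightarrow> 'a set" where
  "Adj R D A = {a\<in>pos_roots R D. \<exists>b\<in>A. root_le D a b}"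

inductive_set weyl_group :: "'a::euclidean_space set \<Rightarrow> ('a \<Rightarrow> 'a) set" for R where
  id: "id \<in> weyl_group R"
| step: "w \<in> weyl_group R \<Longrightarrow> a \<in> R \<Longrightarrow> refl a \<circ> w \<in> weyl_group R"

definition refl_prod :: "'a::real_inner list \<Rightarrow> 'a \<Rightarrow> 'a" where
  "refl_prod l = foldr (\<lambda>a f. refl a \<circ> f) l id"

definition weyl_length :: "'a::euclidean_space set \<Rightarrow> ('a \<Rightarrow> 'a) \<Rightarrow> nat" where
  "weyl_length D w = (LEAST n. \<exists>l. length l = n \<and> set l \<subseteq> D \<and> refl_prod l = w)"

definition longest_element :: "'a::euclidean_space set \<Rightarrow> 'a set \<Rightarrow> ('a \<Rightarrow> 'a) \<Rightarrow> bool" where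
  "longest_element R D w0 \<longleftrightarrow> w0 \<in> weyl_group R
     \<and> (\<forall>w\<in>weyl_group R. weyl_length D w \<le> weyl_length D w0)"

primrec nu :: "'a::euclidean_space set \<Rightarrow> 'a set \<Rightarrow> ('a \<Rightarrow> 'a) \<Rightarrow> nat \<Rightarrow> 'a set" where
  "nu R D u 0 = u ` pos_roots R D \<inter> pos_roots R D"
| "nu R D u (Suc k) = u ` Adj R D (nu R D u k) \<inter> pos_roots R D"

text \<open>u is rational iff the eventual value of nu^k(u) is empty
  (once some nu^k(u) is empty, all later ones are, since Adj {} = {}).\<close>
definition rational :: "'a::euclidean_space set \<Rightarrow> 'a set \<Rightarrow> ('a \<Rightarrow> 'a) \<Rightarrow> bool" where
  "rational R D u \<longleftrightarrow> (\<exists>k. nu R D u k = {})"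

end

theory Submission
  imports Defs
begin

lemma refl_linear: "linear (refl a)"
  by (rule linearI) (auto simp: refl_def algebra_simps inner_add_left add_divide_distrib)

lemma refl_inner: assumes "a \<noteq> 0" shows "refl a x \<bullet> refl a y = x \<bullet> y"
proof -
  have aa: "a \<bullet> a \<noteq> 0" using assms by simp
  show ?thesis unfolding refl_def
    using aa by (simp add: inner_diff_left inner_diff_right field_simps) (simp add: inner_commute algebra_simps)
qed

lemma refl_refl: assumes "a \<noteq> 0" shows "refl a (refl a x) = x"
proof -
  have aa: "a \<bullet> a \<noteq> 0" using assms by simp
  show ?thesis unfolding refl_def using aa
    by (simp add: inner_diff_left algebra_simps field_simps)
qed

lemma refl_self: assumes "a \<noteq> 0" shows "refl a a = - a"
  using assms by (simp add: refl_def algebra_simps scaleR_2)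

lemma refl_neg: "refl (- a) = refl a"
  by (rule ext) (simp add: refl_def)

lemma refl_prod_Nil[simp]: "refl_prod [] = id" by (simp add: refl_prod_def)
lemma refl_prod_Cons[simp]: "refl_prod (a # l) = refl a \<circ> refl_prod l" by (simp add: refl_prod_def)
lemma refl_prod_append: "refl_prod (l @ m) = refl_prod l \<circ> refl_prod m"
  by (induction l) auto

lemma refl_prod_linear: "linear (refl_prod l)"
proof (induction l)
  case Nil then show ?case unfolding refl_prod_Nil by (rule linear_id)
next
  case (Cons a l) then show ?case unfolding refl_prod_Cons by (rule linear_compose[OF _ refl_linear])
qed

lemma refl_prod_inner: "0 \<notin> set l \<Longrightarrow> refl_prod l x \<bullet> refl_prod l y = x \<bullet> y"
  by (induction l arbitrary: x y) (auto simp: refl_inner)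

lemma refl_prod_rev: "0 \<notin> set l \<Longrightarrow> refl_prod l (refl_prod (rev l) x) = x"
  by (induction l arbitrary: x) (auto simp: refl_prod_append refl_refl)

lemma refl_prod_rev2: "0 \<notin> set l \<Longrightarrow> refl_prod (rev l) (refl_prod l x) = x"
  using refl_prod_rev[of "rev l"] by simp

lemma refl_prod_bij: "0 \<notin> set l \<Longrightarrow> bij (refl_prod l)"
  by (metis bij_betw_byWitness refl_prod_rev refl_prod_rev2 UNIV_I subsetI image_eqI)

lemma conj_refl:
  assumes "linear v" "\<And>x y. v x \<bullet> v y = x \<bullet> y"
  shows "refl (v a) (v y) = v (refl a y)"
  unfolding refl_def using assms by (simp add: linear_diff linear_scale)

locale rs =
  fixes R D :: "'a::euclidean_space set"
  assumes RS: "root_system R" and BS: "is_base R D"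
begin

abbreviation "P \<equiv> pos_roots R D"
abbreviation "Ng \<equiv> uminus ` pos_roots R D"
abbreviation "nic \<equiv> nonneg_int_comb D"

lemma finR: "finite R" using RS by (simp add: root_system_def)
lemma zeroR: "0 \<notin> R" using RS by (simp add: root_system_def)
lemma reflR: "a \<in> R \<Longrightarrow> b \<in> R \<Longrightarrow> refl a b \<in> R" using RS by (auto simp: root_system_def)
lemma intR: "a \<in> R \<Longrightarrow> b \<in> R \<Longrightarrow> 2 * (b \<bullet> a) / (a \<bullet> a) \<in> \<int>" using RS by (auto simp: root_system_def)
lemma redR: "a \<in> R \<Longrightarrow> c *\<^sub>R a \<in> R \<Longrightarrow> c = 1 \<or> c = -1" using RS by (auto simp: root_system_def)
lemma DR: "D \<subseteq> R" using BS by (simp add: is_base_def)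
lemma indD: "independent D" using BS by (simp add: is_base_def)
lemma finD: "finite D" using indD by (simp add: independent_bound)
lemma nzR: "a \<in> R \<Longrightarrow> a \<noteq> 0" using zeroR by auto
lemma negR: "a \<in> R \<Longrightarrow> - a \<in> R"
  using reflR[of a a] refl_self[of a] nzR by auto

lemma coef_zero: "(\<Sum>d\<in>D. x d *\<^sub>R d) = 0 \<Longrightarrow> d \<in> D \<Longrightarrow> x d = 0"
  using indD unfolding independent_explicit by auto

lemma nic_zero: "nic 0"
  unfolding nonneg_int_comb_def by (rule exI[of _ "\<lambda>_. 0"]) auto

lemma nic_add: "nic x \<Longrightarrow> nic y \<Longrightarrow> nic (x + y)"
  unfolding nonneg_int_comb_def
proof (elim exE conjE)
  fix c e assume "\<forall>d\<in>D. c d \<in> \<nat>" "x = (\<Sum>d\<in>D. c d *\<^sub>R d)" "\<forall>d\<in>D. e d \<in> \<nat>" "y = (\<Sum>d\<in>D. e d *\<^sub>R d)"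
  then show "\<exists>c. (\<forall>d\<in>D. c d \<in> \<nat>) \<and> x + y = (\<Sum>d\<in>D. c d *\<^sub>R d)"
    by (intro exI[of _ "\<lambda>d. c d + e d"]) (auto simp: scaleR_add_left sum.distrib Nats_add)
qed

lemma nic_scale: "k \<in> \<nat> \<Longrightarrow> nic x \<Longrightarrow> nic (k *\<^sub>R x)"
  unfolding nonneg_int_comb_def
proof (elim exE conjE)
  fix c assume "k \<in> \<nat>" "\<forall>d\<in>D. c d \<in> \<nat>" "x = (\<Sum>d\<in>D. c d *\<^sub>R d)"
  then show "\<exists>c. (\<forall>d\<in>D. c d \<in> \<nat>) \<and> k *\<^sub>R x = (\<Sum>d\<in>D. c d *\<^sub>R d)"
    by (intro exI[of _ "\<lambda>d. k * c d"]) (auto simp: scaleR_sum_right Nats_mult)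
qed

lemma nic_sum: "finite S \<Longrightarrow> (\<And>i. i \<in> S \<Longrightarrow> nic (f i)) \<Longrightarrow> nic (\<Sum>i\<in>S. f i)"
  by (induction S rule: finite_induct) (auto simp: nic_zero nic_add)

lemma Nats_ge0: "(x::real) \<in> \<nat> \<Longrightarrow> x \<ge> 0" by (auto elim: Nats_cases)

lemma nic_both: assumes "nic x" "nic (- x)" shows "x = 0"
proof -
  from assms obtain c e where c: "\<forall>d\<in>D. c d \<in> \<nat>" "x = (\<Sum>d\<in>D. c d *\<^sub>R d)"
    and e: "\<forall>d\<in>D. e d \<in> \<nat>" "- x = (\<Sum>d\<in>D. e d *\<^sub>R d)"
    unfolding nonneg_int_comb_def by blast
  have "(\<Sum>d\<in>D. (c d + e d) *\<^sub>R d) = x + - x" using c e by (simp add: scaleR_add_left sum.distrib)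
  then have "(\<Sum>d\<in>D. (c d + e d) *\<^sub>R d) = 0" by simp
  then have "\<forall>d\<in>D. c d + e d = 0" using coef_zero[of "\<lambda>d. c d + e d"] by blast
  then have "\<forall>d\<in>D. c d = 0" using c e Nats_ge0 by (metis add_nonneg_eq_0_iff)
  then show ?thesis using c by simp
qed

lemma D_pos: assumes "d \<in> D" shows "d \<in> P"
proof -
  have "(\<Sum>x\<in>D. (if x = d then 1 else 0) *\<^sub>R x) = d"
    using assms finD by (simp add: if_distrib[of "\<lambda>t. t *\<^sub>R _"] sum.delta' cong: if_cong)
  then have "nic d" unfolding nonneg_int_comb_def
    by (intro exI[of _ "\<lambda>x. if x = d then 1 else 0"]) auto
  then show ?thesis using assms DR by (auto simp: pos_roots_def)
qed

lemma PR: "x \<in> P \<Longrightarrow> x \<in> R" by (simp add: pos_roots_def)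
lemma NgR: "x \<in> Ng \<Longrightarrow> x \<in> R" using negR by (auto simp: pos_roots_def)
lemma Ng_iff: "x \<in> Ng \<longleftrightarrow> x \<in> R \<and> nic (- x)"
  using negR by (auto simp: pos_roots_def image_iff intro: exI[of _ "-x"])

lemma disj: "x \<in> P \<Longrightarrow> x \<notin> Ng"
  using nic_both zeroR by (auto simp: pos_roots_def Ng_iff)

lemma dich: "x \<in> R \<Longrightarrow> x \<in> P \<or> x \<in> Ng"
  unfolding Ng_iff using BS by (auto simp: is_base_def pos_roots_def)

lemma finP: "finite P" using finR by (simp add: pos_roots_def)

end

context rs begin

lemma F2: assumes aD: "a \<in> D" and bP: "b \<in> P" and ne: "b \<noteq> a" shows "refl a b \<in> P"
proof (rule ccontr)
  assume nP: "refl a b \<notin> P"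
  have "refl a b \<in> R" using reflR DR PR aD bP by auto
  then have "refl a b \<in> Ng" using dich nP by blast
  then have "nic (- refl a b)" by (simp add: Ng_iff)
  then obtain e where e: "\<forall>d\<in>D. e d \<in> \<nat>" "- refl a b = (\<Sum>d\<in>D. e d *\<^sub>R d)"
    unfolding nonneg_int_comb_def by blast
  from bP obtain c where c: "\<forall>d\<in>D. c d \<in> \<nat>" "b = (\<Sum>d\<in>D. c d *\<^sub>R d)"
    unfolding pos_roots_def nonneg_int_comb_def by blast
  define k where "k = 2 * (b \<bullet> a) / (a \<bullet> a)"
  have r: "- refl a b = k *\<^sub>R a - b" by (simp add: refl_def k_def)
  have sumk: "(\<Sum>d\<in>D. (if d = a then k else 0) *\<^sub>R d) = k *\<^sub>R a"
    using aD finD by (simp add: if_distrib[of "\<lambda>t. t *\<^sub>R _"] sum.delta' cong: if_cong)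
  have "(\<Sum>d\<in>D. (c d + e d - (if d = a then k else 0)) *\<^sub>R d)
      = (\<Sum>d\<in>D. c d *\<^sub>R d) + (\<Sum>d\<in>D. e d *\<^sub>R d) - (\<Sum>d\<in>D. (if d = a then k else 0) *\<^sub>R d)"
    by (simp add: scaleR_diff_left scaleR_add_left sum.distrib sum_subtractf)
  also have "\<dots> = 0" using c e r sumk by simp
  finally have z: "\<forall>d\<in>D. c d + e d - (if d = a then k else 0) = 0"
    using coef_zero[of "\<lambda>d. c d + e d - (if d = a then k else 0)"] by blast
  have c0: "\<forall>d\<in>D-{a}. c d = 0"
  proof
    fix d assume d: "d \<in> D - {a}"
    then have "c d + e d = 0" using z by auto
    moreover have "c d \<ge> 0" "e d \<ge> 0" using d c(1) e(1) Nats_ge0 by auto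
    ultimately show "c d = 0" by simp
  qed
  have "b = c a *\<^sub>R a + (\<Sum>d\<in>D-{a}. c d *\<^sub>R d)"
    using c(2) sum.remove[OF finD aD, of "\<lambda>d. c d *\<^sub>R d"] by simp
  also have "(\<Sum>d\<in>D-{a}. c d *\<^sub>R d) = 0" using c0 by simp
  finally have bb: "b = c a *\<^sub>R a" by simp
  moreover have "a \<in> R" using DR aD by auto
  moreover have "b \<in> R" using bP PR by auto
  ultimately have "c a = 1 \<or> c a = -1" using redR[of a "c a"] by simp
  moreover have "c a \<ge> 0" using c aD Nats_ge0 by auto
  ultimately have "c a = 1" by auto
  then show False using bb ne by simp
qed

lemma refl_prod_R: "set l \<subseteq> R \<Longrightarrow> x \<in> R \<Longrightarrow> refl_prod l x \<in> R"
  by (induction l arbitrary: x) (auto intro: reflR)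

lemma nz_set: "set l \<subseteq> R \<Longrightarrow> 0 \<notin> set l" using zeroR by auto

lemma W_word: "w \<in> weyl_group R \<Longrightarrow> \<exists>l. set l \<subseteq> R \<and> w = refl_prod l"
proof (induction rule: weyl_group.induct)
  case id then show ?case by (intro exI[of _ "[]"]) simp
next
  case (step w a) then obtain l where "set l \<subseteq> R" "w = refl_prod l" by blast
  then show ?case using step by (intro exI[of _ "a # l"]) simp
qed

lemma word_W: "set l \<subseteq> R \<Longrightarrow> refl_prod l \<in> weyl_group R"
  by (induction l) (auto intro: weyl_group.intros)

lemma W_comp: "u \<in> weyl_group R \<Longrightarrow> v \<in> weyl_group R \<Longrightarrow> u \<circ> v \<in> weyl_group R"
proof -
  assume "u \<in> weyl_group R" "v \<in> weyl_group R"
  then obtain l m where "set l \<subseteq> R" "u = refl_prod l" "set m \<subseteq> R" "v = refl_prod m"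
    using W_word by meson
  then have "u \<circ> v = refl_prod (l @ m)" "set (l @ m) \<subseteq> R" by (auto simp: refl_prod_append)
  then show ?thesis using word_W by metis
qed

end

context rs begin
lemma height_exists: "\<exists>f. linear f \<and> (\<forall>d\<in>D. f d = (1::real))"
  using linear_independent_extend[OF indD, of "\<lambda>_. 1"] by auto

lemma f_nonneg: assumes "linear f" "\<forall>d\<in>D. f d = (1::real)" "b \<in> P" shows "f b \<ge> 0"
proof -
  from assms(3) obtain c where c: "\<forall>d\<in>D. c d \<in> \<nat>" "b = (\<Sum>d\<in>D. c d *\<^sub>R d)"
    unfolding pos_roots_def nonneg_int_comb_def by blast
  have "f b = (\<Sum>d\<in>D. f (c d *\<^sub>R d))" unfolding c(2) by (rule linear_sum[OF assms(1)])
  also have "\<dots> = (\<Sum>d\<in>D. c d)" using assms(2) linear_scale[OF assms(1)] by simp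
  finally have fb: "f b = (\<Sum>d\<in>D. c d)" .
  have "(\<Sum>d\<in>D. c d) \<ge> 0" using c(1) Nats_ge0 by (simp add: sum_nonneg)
  then show ?thesis using fb by simp
qed

lemma height_step:
  assumes f: "linear f" "\<forall>d\<in>D. f d = (1::real)" and bP: "b \<in> P" and bD: "b \<notin> D"
  shows "\<exists>d\<in>D. refl d b \<in> P \<and> f (refl d b) \<le> f b - 1"
proof -
  from bP obtain c where c: "\<forall>d\<in>D. c d \<in> \<nat>" "b = (\<Sum>d\<in>D. c d *\<^sub>R d)"
    unfolding pos_roots_def nonneg_int_comb_def by blast
  have "b \<noteq> 0" using bP PR nzR by auto
  then have bb0: "0 < b \<bullet> b" by simp
  have bbs: "b \<bullet> b = (\<Sum>d\<in>D. c d * (b \<bullet> d))"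
  proof -
    have "b \<bullet> b = b \<bullet> (\<Sum>d\<in>D. c d *\<^sub>R d)" using c(2) by simp
    also have "\<dots> = (\<Sum>d\<in>D. c d * (b \<bullet> d))" by (simp add: inner_sum_right)
    finally show ?thesis .
  qed
  have "\<exists>d\<in>D. b \<bullet> d > 0"
  proof (rule ccontr)
    assume nex: "\<not> (\<exists>d\<in>D. b \<bullet> d > 0)"
    have "\<forall>d\<in>D. c d * (b \<bullet> d) \<le> 0"
    proof (intro ballI)
      fix d assume "d \<in> D"
      then have "b \<bullet> d \<le> 0" "c d \<ge> 0" using nex c(1) Nats_ge0 by auto
      then show "c d * (b \<bullet> d) \<le> 0" by (rule mult_nonneg_nonpos[rotated])
    qed
    then have "(\<Sum>d\<in>D. c d * (b \<bullet> d)) \<le> 0" by (simp add: sum_nonpos)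
    then show False using bb0 bbs by linarith
  qed
  then obtain d where dD: "d \<in> D" and pos: "b \<bullet> d > 0" by blast
  define k where "k = 2 * (b \<bullet> d) / (d \<bullet> d)"
  have dR: "d \<in> R" using dD DR by auto
  have "k \<in> \<int>" unfolding k_def using intR[OF dR PR[OF bP]] .
  moreover have "k > 0" unfolding k_def using pos nzR[OF dR] by simp
  ultimately have k1: "k \<ge> 1"
  proof -
    assume "k \<in> \<int>" "k > 0"
    then obtain i where ki: "k = of_int i" by (auto elim: Ints_cases)
    with \<open>k > 0\<close> have "i > 0" by linarith
    then have "i \<ge> 1" by linarith
    then show ?thesis using ki by linarith
  qed
  have r: "refl d b = b - k *\<^sub>R d" by (simp only: refl_def k_def)
  have "f (refl d b) = f b - f (k *\<^sub>R d)" unfolding r by (rule linear_diff[OF f(1)])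
  also have "f (k *\<^sub>R d) = k" using linear_scale[OF f(1)] f(2) dD by simp
  finally have fr: "f (refl d b) = f b - k" .
  have "b \<noteq> d" using bD dD by auto
  then have "refl d b \<in> P" using F2[OF dD bP] by blast
  moreover have "f (refl d b) \<le> f b - 1" using fr k1 by linarith
  ultimately show ?thesis using dD by blast
qed

end

context rs begin
lemma pos_conj: assumes bP: "b \<in> P" shows "\<exists>v a. set v \<subseteq> D \<and> a \<in> D \<and> b = refl_prod v a"
proof -
  obtain f where f: "linear f" "\<forall>d\<in>D. f d = (1::real)" using height_exists by blast
  have "\<forall>b\<in>P. f b \<le> real n \<longrightarrow> (\<exists>v a. set v \<subseteq> D \<and> a \<in> D \<and> b = refl_prod v a)" for n
  proof (induction n)
    case 0
    show ?case
    proof (intro ballI impI)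
      fix b assume b: "b \<in> P" "f b \<le> real 0"
      show "\<exists>v a. set v \<subseteq> D \<and> a \<in> D \<and> b = refl_prod v a"
      proof (cases "b \<in> D")
        case True then show ?thesis by (intro exI[of _ "[]"] exI[of _ b]) simp
      next
        case False
        then obtain d where "d \<in> D" "refl d b \<in> P" "f (refl d b) \<le> f b - 1"
          using height_step[OF f b(1)] by blast
        moreover have "f (refl d b) \<ge> 0" using f_nonneg[OF f] calculation(2) by blast
        ultimately show ?thesis using b(2) by simp
      qed
    qed
  next
    case (Suc n)
    show ?case
    proof (intro ballI impI)
      fix b assume b: "b \<in> P" "f b \<le> real (Suc n)"
      show "\<exists>v a. set v \<subseteq> D \<and> a \<in> D \<and> b = refl_prod v a"
      proof (cases "b \<in> D")
        case True then show ?thesis by (intro exI[of _ "[]"] exI[of _ b]) simp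
      next
        case False
        then obtain d where d: "d \<in> D" "refl d b \<in> P" "f (refl d b) \<le> f b - 1"
          using height_step[OF f b(1)] by blast
        then have "f (refl d b) \<le> real n" using b by simp
        then obtain v a where va: "set v \<subseteq> D" "a \<in> D" "refl d b = refl_prod v a"
          using Suc.IH d(2) by blast
        have "b = refl d (refl d b)" using refl_refl[of d b] nzR DR d(1) by auto
        then have "b = refl_prod (d # v) a" using va by simp
        then show ?thesis using va d by (intro exI[of _ "d # v"] exI[of _ a]) auto
      qed
    qed
  qed
  moreover obtain n :: nat where "f b \<le> real n" using real_arch_simple by blast
  ultimately show ?thesis using bP by blast
qed

lemma refl_word: assumes bR: "b \<in> R" shows "\<exists>m. set m \<subseteq> D \<and> refl b = refl_prod m"
proof -
  obtain p where p: "p \<in> P" "refl b = refl p"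
  proof (cases "b \<in> P")
    case True then show ?thesis using that by blast
  next
    case False then have "b \<in> Ng" using dich[OF bR] by blast
    then obtain p where "p \<in> P" "b = - p" by blast
    then show ?thesis using that refl_neg[of p] by blast
  qed
  obtain v a where va: "set v \<subseteq> D" "a \<in> D" "p = refl_prod v a" using pos_conj[OF p(1)] by blast
  have nz: "0 \<notin> set v" using va DR nz_set by blast
  have "refl p = refl_prod (v @ a # rev v)"
  proof
    fix x
    have "refl p x = refl p (refl_prod v (refl_prod (rev v) x))" using refl_prod_rev[OF nz] by simp
    also have "\<dots> = refl_prod v (refl a (refl_prod (rev v) x))"
      unfolding va(3) by (rule conj_refl[OF refl_prod_linear refl_prod_inner[OF nz]])
    finally show "refl p x = refl_prod (v @ a # rev v) x" by (simp add: refl_prod_append)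
  qed
  then show ?thesis using p va by (intro exI[of _ "v @ a # rev v"]) auto
qed

lemma W_simple_word: "w \<in> weyl_group R \<Longrightarrow> \<exists>l. set l \<subseteq> D \<and> w = refl_prod l"
proof (induction rule: weyl_group.induct)
  case id then show ?case by (intro exI[of _ "[]"]) simp
next
  case (step w a)
  then obtain l where l: "set l \<subseteq> D" "w = refl_prod l" by blast
  obtain m where m: "set m \<subseteq> D" "refl a = refl_prod m" using refl_word step by blast
  show ?case using l m by (intro exI[of _ "m @ l"]) (simp add: refl_prod_append)
qed

end

context rs begin

definition Nf :: "('a \<Rightarrow> 'a) \<Rightarrow> nat" where "Nf w = card {b \<in> P. w b \<in> Ng}"

lemma wordD_R: "set l \<subseteq> D \<Longrightarrow> x \<in> R \<Longrightarrow> refl_prod l x \<in> R"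
  using refl_prod_R DR by blast

lemma wordD_nz: "set l \<subseteq> D \<Longrightarrow> 0 \<notin> set l"
  using nz_set DR by blast

lemma wordD_inj: "set l \<subseteq> D \<Longrightarrow> inj (refl_prod l)"
  using refl_prod_bij[OF wordD_nz] bij_is_inj by blast

lemma Nf_id: "Nf id = 0"
proof -
  have "{b \<in> P. id b \<in> Ng} = {}" using disj by auto
  then show ?thesis unfolding Nf_def by (simp only: card.empty)
qed

lemma N_left: assumes aD: "a \<in> D" and l: "set l \<subseteq> D"
  shows "Nf (refl a \<circ> refl_prod l) \<le> Nf (refl_prod l) + 1"
proof -
  let ?w = "refl_prod l"
  have sub: "{b \<in> P. (refl a \<circ> ?w) b \<in> Ng} \<subseteq> {b \<in> P. ?w b \<in> Ng} \<union> {b \<in> P. ?w b = a}"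
  proof
    fix b assume b: "b \<in> {b \<in> P. (refl a \<circ> ?w) b \<in> Ng}"
    have bP: "b \<in> P" and bN: "refl a (?w b) \<in> Ng" using b by auto
    have "?w b \<in> R" using wordD_R[OF l] PR[OF bP] by blast
    then have "?w b \<in> P \<or> ?w b \<in> Ng" using dich by blast
    moreover have False if "?w b \<in> P" "?w b \<noteq> a"
    proof -
      have "refl a (?w b) \<in> P" using F2[OF aD that] .
      then show False using disj bN by blast
    qed
    ultimately show "b \<in> {b \<in> P. ?w b \<in> Ng} \<union> {b \<in> P. ?w b = a}" using bP by blast
  qed
  have c1: "card {b \<in> P. ?w b = a} \<le> 1"
  proof -
    have "finite {b \<in> P. ?w b = a}" using finP by simp
    moreover have "\<forall>x\<in>{b \<in> P. ?w b = a}. \<forall>y\<in>{b \<in> P. ?w b = a}. x = y"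
      using wordD_inj[OF l] unfolding inj_def by simp
    ultimately have "card {b \<in> P. ?w b = a} \<le> Suc 0" using card_le_Suc0_iff_eq by blast
    then show ?thesis by simp
  qed
  have "Nf (refl a \<circ> ?w) \<le> card ({b \<in> P. ?w b \<in> Ng} \<union> {b \<in> P. ?w b = a})"
    unfolding Nf_def by (rule card_mono) (use finP sub in auto)
  also have "\<dots> \<le> Nf ?w + card {b \<in> P. ?w b = a}" unfolding Nf_def by (rule card_Un_le)
  finally show ?thesis using c1 by linarith
qed

lemma N_len: "set l \<subseteq> D \<Longrightarrow> Nf (refl_prod l) \<le> length l"
proof (induction l)
  case Nil
  have "Nf (refl_prod []) = 0" unfolding refl_prod_Nil by (rule Nf_id)
  then show ?case by (simp del: refl_prod_Nil)
next
  case (Cons a l)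
  then have "Nf (refl a \<circ> refl_prod l) \<le> Nf (refl_prod l) + 1" using N_left by simp
  moreover have "Nf (refl_prod l) \<le> length l" using Cons by simp
  ultimately show ?case unfolding refl_prod_Cons list.size by linarith
qed

lemma N_right: assumes aD: "a \<in> D" and l: "set l \<subseteq> D" and pos: "refl_prod l a \<in> P"
  shows "Nf (refl_prod l \<circ> refl a) \<ge> Nf (refl_prod l) + 1"
proof -
  let ?w = "refl_prod l"
  let ?S = "{b \<in> P. ?w b \<in> Ng}"
  have anz: "a \<noteq> 0" using aD DR nzR by auto
  have aP: "a \<in> P" using D_pos[OF aD] .
  have sub: "insert a (refl a ` ?S) \<subseteq> {b \<in> P. (?w \<circ> refl a) b \<in> Ng}"
  proof
    fix x assume x: "x \<in> insert a (refl a ` ?S)"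
    show "x \<in> {b \<in> P. (?w \<circ> refl a) b \<in> Ng}"
    proof (cases "x = a")
      case True
      have "?w (refl a a) = - ?w a" using refl_self[OF anz] linear_neg[OF refl_prod_linear] by simp
      then show ?thesis using True aP pos by auto
    next
      case False
      then obtain g where g: "g \<in> ?S" "x = refl a g" using x by auto
      have "g \<noteq> a" using g pos disj by auto
      then have "x \<in> P" using F2[OF aD] g by auto
      moreover have "?w (refl a x) = ?w g" using g refl_refl[OF anz] by simp
      ultimately show ?thesis using g by auto
    qed
  qed
  have notin: "a \<notin> refl a ` ?S"
  proof
    assume "a \<in> refl a ` ?S"
    then obtain g where g: "g \<in> ?S" "a = refl a g" by auto
    then have "refl a a = refl a (refl a g)" by simp
    then have "g = refl a a" using refl_refl[OF anz, of g] by simp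
    then have "g = - a" using refl_self[OF anz] by simp
    then have "g \<in> Ng" using aP by auto
    then show False using g disj by auto
  qed
  have inj: "inj_on (refl a) ?S"
  proof (rule inj_onI)
    fix x y assume "refl a x = refl a y"
    then have "refl a (refl a x) = refl a (refl a y)" by simp
    then show "x = y" using refl_refl[OF anz] by simp
  qed
  have "Nf ?w + 1 = card (insert a (refl a ` ?S))"
    unfolding Nf_def using notin card_image[OF inj] finP by simp
  also have "\<dots> \<le> Nf (?w \<circ> refl a)" unfolding Nf_def by (rule card_mono) (use finP sub in auto)
  finally show ?thesis .
qed

end

context rs begin

lemma wordD_linear: "linear (refl_prod l)" by (rule refl_prod_linear)

lemma DEL1: "set l \<subseteq> D \<Longrightarrow> Nf (refl_prod l) < length l \<Longrightarrow>
  \<exists>l1 a l2. l = l1 @ a # l2 \<and> refl_prod l1 a \<in> Ng"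
proof (induction l rule: rev_induct)
  case Nil then show ?case by simp
next
  case (snoc a l)
  have l: "set l \<subseteq> D" and aD: "a \<in> D" using snoc.prems by auto
  show ?case
  proof (cases "refl_prod l a \<in> Ng")
    case True then show ?thesis by (intro exI[of _ l] exI[of _ a] exI[of _ "[]"]) simp
  next
    case False
    have "refl_prod l a \<in> R" using wordD_R[OF l] aD DR by auto
    then have pos: "refl_prod l a \<in> P" using dich False by blast
    have "Nf (refl_prod l) + 1 \<le> Nf (refl_prod l \<circ> refl a)" using N_right[OF aD l pos] .
    also have "refl_prod l \<circ> refl a = refl_prod (l @ [a])" by (simp add: refl_prod_append)
    finally have "Nf (refl_prod l) < length l" using snoc.prems by simp
    then obtain l1 b l2 where "l = l1 @ b # l2" "refl_prod l1 b \<in> Ng" using snoc.IH l by blast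
    then show ?thesis by (intro exI[of _ l1] exI[of _ b] exI[of _ "l2 @ [a]"]) simp
  qed
qed

lemma DEL2: "set l1 \<subseteq> D \<Longrightarrow> a \<in> D \<Longrightarrow> refl_prod l1 a \<in> Ng \<Longrightarrow>
  \<exists>m1 b m2. l1 = m1 @ b # m2 \<and> refl_prod m2 a = b"
proof (induction l1)
  case Nil then show ?case using D_pos disj by auto
next
  case (Cons b l)
  have l: "set l \<subseteq> D" and bD: "b \<in> D" using Cons.prems by auto
  show ?case
  proof (cases "refl_prod l a \<in> Ng")
    case True
    then obtain m1 c m2 where "l = m1 @ c # m2" "refl_prod m2 a = c" using Cons.IH l Cons.prems(2) by blast
    then show ?thesis by (intro exI[of _ "b # m1"] exI[of _ c] exI[of _ m2]) simp
  next
    case False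
    have "refl_prod l a \<in> R" using wordD_R[OF l] Cons.prems(2) DR by auto
    then have pos: "refl_prod l a \<in> P" using dich False by blast
    have "refl b (refl_prod l a) \<in> Ng" using Cons.prems(3) by simp
    then have "refl_prod l a = b" using F2[OF bD pos] disj by blast
    then show ?thesis by (intro exI[of _ "[]"] exI[of _ b] exI[of _ l]) simp
  qed
qed

lemma conj_cancel: assumes m: "set m \<subseteq> D" and aD: "a \<in> D" and eq: "refl_prod m a = b"
  shows "refl b \<circ> refl_prod m \<circ> refl a = refl_prod m"
proof
  fix x
  have nz: "0 \<notin> set m" using wordD_nz[OF m] .
  have anz: "a \<noteq> 0" using aD DR nzR by auto
  have "refl b (refl_prod m (refl a x)) = refl_prod m (refl a (refl a x))"
    unfolding eq[symmetric] by (rule conj_refl[OF refl_prod_linear refl_prod_inner[OF nz]])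
  also have "\<dots> = refl_prod m x" using refl_refl[OF anz] by simp
  finally show "(refl b \<circ> refl_prod m \<circ> refl a) x = refl_prod m x" by simp
qed

lemma deletion: assumes l: "set l \<subseteq> D" and lt: "Nf (refl_prod l) < length l"
  shows "\<exists>l'. set l' \<subseteq> D \<and> refl_prod l' = refl_prod l \<and> length l' < length l"
proof -
  obtain l1 a l2 where s1: "l = l1 @ a # l2" "refl_prod l1 a \<in> Ng" using DEL1[OF l lt] by blast
  have l1: "set l1 \<subseteq> D" and aD: "a \<in> D" and l2: "set l2 \<subseteq> D" using l s1 by auto
  obtain m1 b m2 where s2: "l1 = m1 @ b # m2" "refl_prod m2 a = b" using DEL2[OF l1 aD s1(2)] by blast
  have m1: "set m1 \<subseteq> D" and m2: "set m2 \<subseteq> D" using l1 s2 by auto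
  have cc: "refl b \<circ> refl_prod m2 \<circ> refl a = refl_prod m2" using conj_cancel[OF m2 aD s2(2)] .
  have "refl_prod l = refl_prod m1 \<circ> (refl b \<circ> refl_prod m2 \<circ> refl a) \<circ> refl_prod l2"
    unfolding s1(1) s2(1) by (simp add: refl_prod_append comp_assoc)
  also have "\<dots> = refl_prod (m1 @ m2 @ l2)" unfolding cc by (simp add: refl_prod_append comp_assoc)
  finally show ?thesis using m1 m2 l2 s1(1) s2(1)
    by (intro exI[of _ "m1 @ m2 @ l2"]) auto
qed

lemma wl_witness: assumes "w \<in> weyl_group R"
  shows "\<exists>l. set l \<subseteq> D \<and> refl_prod l = w \<and> length l = weyl_length D w"
proof -
  obtain l where "set l \<subseteq> D" "w = refl_prod l" using W_simple_word[OF assms] by blast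
  then have ex: "\<exists>n l. length l = n \<and> set l \<subseteq> D \<and> refl_prod l = w" by blast
  show ?thesis using LeastI_ex[OF ex] unfolding weyl_length_def by blast
qed

lemma wl_le: "set l \<subseteq> D \<Longrightarrow> refl_prod l = w \<Longrightarrow> weyl_length D w \<le> length l"
  unfolding weyl_length_def by (rule Least_le) blast

lemma N_le_wl: assumes "w \<in> weyl_group R" shows "Nf w \<le> weyl_length D w"
  using wl_witness[OF assms] N_len by metis

lemma wl_le_N: assumes "w \<in> weyl_group R" shows "weyl_length D w \<le> Nf w"
proof (rule ccontr)
  assume "\<not> weyl_length D w \<le> Nf w"
  obtain l where l: "set l \<subseteq> D" "refl_prod l = w" "length l = weyl_length D w"
    using wl_witness[OF assms] by blast
  then have "Nf (refl_prod l) < length l" using \<open>\<not> weyl_length D w \<le> Nf w\<close> by simp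
  then obtain l' where "set l' \<subseteq> D" "refl_prod l' = refl_prod l" "length l' < length l"
    using deletion[OF l(1)] by blast
  then have "weyl_length D w \<le> length l'" using wl_le l(2) by metis
  then show False using \<open>length l' < length l\<close> l(3) by simp
qed

end

context rs begin

lemma neg_comb: assumes "\<forall>d\<in>D. c d \<in> \<nat>" "\<forall>d\<in>D. c d \<noteq> 0 \<longrightarrow> v d \<in> Ng"
  shows "nic (- (\<Sum>d\<in>D. c d *\<^sub>R v d))"
proof -
  have "- (\<Sum>d\<in>D. c d *\<^sub>R v d) = (\<Sum>d\<in>D. c d *\<^sub>R (- v d))"
    by (simp add: sum_negf[symmetric])
  also have "nic \<dots>"
  proof (rule nic_sum[OF finD])
    fix d assume d: "d \<in> D"
    show "nic (c d *\<^sub>R (- v d))"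
    proof (cases "c d = 0")
      case True then show ?thesis using nic_zero by simp
    next
      case False
      then have "nic (- v d)" using assms(2) d Ng_iff by blast
      then show ?thesis using nic_scale assms(1) d by blast
    qed
  qed
  finally show ?thesis .
qed

lemma neg_all: assumes l: "set l \<subseteq> D" and neg: "\<forall>a\<in>D. refl_prod l a \<in> Ng"
  shows "\<forall>b\<in>P. refl_prod l b \<in> Ng"
proof
  fix b assume bP: "b \<in> P"
  let ?w = "refl_prod l"
  from bP obtain c where c: "\<forall>d\<in>D. c d \<in> \<nat>" "b = (\<Sum>d\<in>D. c d *\<^sub>R d)"
    unfolding pos_roots_def nonneg_int_comb_def by blast
  have "?w b = (\<Sum>d\<in>D. ?w (c d *\<^sub>R d))" unfolding c(2) by (rule linear_sum[OF refl_prod_linear])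
  also have "\<dots> = (\<Sum>d\<in>D. c d *\<^sub>R ?w d)" by (intro sum.cong refl linear_scale[OF refl_prod_linear])
  finally have wb: "?w b = (\<Sum>d\<in>D. c d *\<^sub>R ?w d)" .
  have "nic (- ?w b)" unfolding wb using neg_comb[OF c(1)] neg by blast
  moreover have wbR: "?w b \<in> R" using wordD_R[OF l] PR[OF bP] .
  ultimately show "?w b \<in> Ng" using Ng_iff by blast
qed

lemma w0_neg_simple: assumes "longest_element R D w0" shows "\<forall>a\<in>D. w0 a \<in> Ng"
proof (rule ccontr)
  assume "\<not> (\<forall>a\<in>D. w0 a \<in> Ng)"
  then obtain a where aD: "a \<in> D" and nN: "w0 a \<notin> Ng" by blast
  have w0W: "w0 \<in> weyl_group R" and mx: "\<forall>w\<in>weyl_group R. weyl_length D w \<le> weyl_length D w0"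
    using assms unfolding longest_element_def by auto
  obtain l where l: "set l \<subseteq> D" "w0 = refl_prod l" using W_simple_word[OF w0W] by blast
  have "w0 a \<in> R" using l wordD_R aD DR by auto
  then have pos: "refl_prod l a \<in> P" using dich nN l by blast
  have N1: "Nf w0 + 1 \<le> Nf (w0 \<circ> refl a)" using N_right[OF aD l(1) pos] l(2) by simp
  have eq: "w0 \<circ> refl a = refl_prod (l @ [a])" using l(2) by (simp add: refl_prod_append)
  have W': "w0 \<circ> refl a \<in> weyl_group R" unfolding eq using l(1) aD DR by (intro word_W) auto
  have "Nf (w0 \<circ> refl a) \<le> weyl_length D (w0 \<circ> refl a)" using N_le_wl[OF W'] .
  moreover have "weyl_length D w0 \<le> Nf w0" using wl_le_N[OF w0W] .
  moreover have "weyl_length D (w0 \<circ> refl a) \<le> weyl_length D w0" using mx W' by blast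
  ultimately show False using N1 by linarith
qed

lemma w0_neg: assumes "longest_element R D w0" shows "\<forall>b\<in>P. w0 b \<in> Ng"
proof -
  have w0W: "w0 \<in> weyl_group R" using assms unfolding longest_element_def by auto
  obtain l where l: "set l \<subseteq> D" "w0 = refl_prod l" using W_simple_word[OF w0W] by blast
  show ?thesis using neg_all[OF l(1)] w0_neg_simple[OF assms] l(2) by simp
qed

lemma prod_id: assumes uW: "u \<in> weyl_group R" and wW: "w \<in> weyl_group R"
  and un: "\<forall>b\<in>P. u b \<in> Ng" and wn: "\<forall>b\<in>P. w b \<in> Ng"
  shows "u \<circ> w = id"
proof -
  have vW: "u \<circ> w \<in> weyl_group R" using W_comp[OF uW wW] .
  obtain lu where lu: "set lu \<subseteq> D" "u = refl_prod lu" using W_simple_word[OF uW] by blast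
  have lin: "linear u" using lu(2) refl_prod_linear by simp
  have pos: "(u \<circ> w) b \<in> P" if bP: "b \<in> P" for b
  proof -
    obtain g where g: "g \<in> P" "w b = - g" using wn bP by blast
    obtain h where h: "h \<in> P" "u g = - h" using un g(1) by blast
    have "(u \<circ> w) b = - u g" using g(2) linear_neg[OF lin] by simp
    then show ?thesis using h by simp
  qed
  have "{b \<in> P. (u \<circ> w) b \<in> Ng} = {}" using pos disj by blast
  then have "Nf (u \<circ> w) = 0" unfolding Nf_def by (simp only: card.empty)
  then have "weyl_length D (u \<circ> w) = 0" using wl_le_N[OF vW] by simp
  then obtain l where "set l \<subseteq> D" "refl_prod l = u \<circ> w" "length l = 0"
    using wl_witness[OF vW] by metis
  then show ?thesis by simp
qed

lemma uniq_w0: assumes "longest_element R D w0" "u \<in> weyl_group R" "\<forall>b\<in>P. u b \<in> Ng"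
  shows "u = w0"
proof -
  have w0W: "w0 \<in> weyl_group R" using assms unfolding longest_element_def by auto
  have n0: "\<forall>b\<in>P. w0 b \<in> Ng" using w0_neg[OF assms(1)] .
  have "u \<circ> w0 = id" using prod_id[OF assms(2) w0W assms(3) n0] .
  moreover have "w0 \<circ> w0 = id" using prod_id[OF w0W w0W n0 n0] .
  ultimately show ?thesis by (metis comp_assoc comp_id id_comp)
qed

end

context rs begin

lemma main:
  assumes lw: "longest_element R D w0" and uW: "u \<in> weyl_group R"
    and rat: "rational R D u" and ne: "u \<noteq> w0"
  shows "\<exists>a\<in>D. inv u a \<in> P \<and> u a \<in> Ng"
proof (rule ccontr)
  assume H: "\<not> (\<exists>a\<in>D. inv u a \<in> P \<and> u a \<in> Ng)"
  obtain lu where lu: "set lu \<subseteq> D" "u = refl_prod lu" using W_simple_word[OF uW] by blast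
  have lin: "linear u" using lu(2) refl_prod_linear by simp
  have bij: "bij u" using lu(2) refl_prod_bij[OF wordD_nz[OF lu(1)]] by simp
  have inj: "inj u" using bij bij_is_inj by blast
  have uR: "\<And>x. x \<in> R \<Longrightarrow> u x \<in> R" using lu wordD_R by simp
  have uRR: "u ` R = R"
    by (rule endo_inj_surj[OF finR]) (use uR inj in \<open>auto simp: inj_on_def\<close>)
  have uinv: "\<And>x. u (inv u x) = x" using bij by (simp add: bij_is_surj surj_f_inv_f)
  have invR: "\<And>x. x \<in> R \<Longrightarrow> inv u x \<in> R"
  proof -
    fix x assume "x \<in> R"
    then obtain y where "y \<in> R" "x = u y" using uRR by blast
    then show "inv u x \<in> R" using inv_f_f[OF inj] by simp
  qed
  have Y: "\<exists>b\<in>D. u b \<in> P"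
  proof (rule ccontr)
    assume "\<not> (\<exists>b\<in>D. u b \<in> P)"
    then have "\<forall>a\<in>D. refl_prod lu a \<in> Ng" using dich uR DR lu(2) by blast
    then have "\<forall>b\<in>P. u b \<in> Ng" using neg_all[OF lu(1)] lu(2) by simp
    then have "u = w0" using uniq_w0[OF lw uW] by blast
    then show False using ne by simp
  qed
  have step: "\<exists>a\<in>D. u a \<in> P \<and> root_le D a (u b)" if bD: "b \<in> D" and ubP: "u b \<in> P" for b
  proof -
    from ubP obtain c where c: "\<forall>d\<in>D. c d \<in> \<nat>" "u b = (\<Sum>d\<in>D. c d *\<^sub>R d)"
      unfolding pos_roots_def nonneg_int_comb_def by blast
    have ex: "\<exists>a\<in>D. c a \<noteq> 0 \<and> u a \<in> P"
    proof (rule ccontr)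
      assume none: "\<not> (\<exists>a\<in>D. c a \<noteq> 0 \<and> u a \<in> P)"
      have each: "\<forall>d\<in>D. c d \<noteq> 0 \<longrightarrow> inv u d \<in> Ng"
      proof (intro ballI impI)
        fix d assume d: "d \<in> D" "c d \<noteq> 0"
        have dR: "d \<in> R" using d DR by auto
        have "u d \<in> Ng" using none d dich uR[OF dR] by blast
        then have "inv u d \<notin> P" using H d by blast
        then show "inv u d \<in> Ng" using dich invR[OF dR] by blast
      qed
      have "u (\<Sum>d\<in>D. c d *\<^sub>R inv u d) = (\<Sum>d\<in>D. u (c d *\<^sub>R inv u d))" by (rule linear_sum[OF lin])
      also have "\<dots> = (\<Sum>d\<in>D. c d *\<^sub>R d)" by (intro sum.cong refl) (simp add: linear_scale[OF lin] uinv)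
      finally have "u (\<Sum>d\<in>D. c d *\<^sub>R inv u d) = u b" using c(2) by simp
      then have bs: "b = (\<Sum>d\<in>D. c d *\<^sub>R inv u d)" using inj by (simp add: inj_eq)
      have "nic (- b)" unfolding bs using neg_comb[OF c(1) each] .
      moreover have "nic b" using D_pos[OF bD] by (simp add: pos_roots_def)
      ultimately have "b = 0" using nic_both by blast
      then show False using bD DR nzR by auto
    qed
    then obtain a where aD: "a \<in> D" and ca: "c a \<noteq> 0" and uaP: "u a \<in> P" by blast
    define c' where "c' = (\<lambda>d. if d = a then c a - 1 else c d)"
    have c'N: "\<forall>d\<in>D. c' d \<in> \<nat>"
    proof
      fix d assume d: "d \<in> D"
      show "c' d \<in> \<nat>"
      proof (cases "d = a")
        case True
        obtain n where n: "c a = of_nat n" using c(1) aD by (auto elim: Nats_cases)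
        then have "n \<ge> 1" using ca by (cases n) auto
        then have "c a - 1 = of_nat (n - 1)" using n by (simp add: of_nat_diff)
        then show ?thesis using True unfolding c'_def by simp
      next
        case False then show ?thesis using c(1) d unfolding c'_def by simp
      qed
    qed
    have "(\<Sum>d\<in>D. c' d *\<^sub>R d) = c' a *\<^sub>R a + (\<Sum>d\<in>D-{a}. c' d *\<^sub>R d)"
      using sum.remove[OF finD aD] by blast
    also have "(\<Sum>d\<in>D-{a}. c' d *\<^sub>R d) = (\<Sum>d\<in>D-{a}. c d *\<^sub>R d)"
      by (intro sum.cong refl) (simp add: c'_def)
    also have "c' a *\<^sub>R a = c a *\<^sub>R a - a" by (simp add: c'_def scaleR_diff_left)
    also have "c a *\<^sub>R a - a + (\<Sum>d\<in>D-{a}. c d *\<^sub>R d) = (c a *\<^sub>R a + (\<Sum>d\<in>D-{a}. c d *\<^sub>R d)) - a"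
      by simp
    also have "c a *\<^sub>R a + (\<Sum>d\<in>D-{a}. c d *\<^sub>R d) = (\<Sum>d\<in>D. c d *\<^sub>R d)"
      using sum.remove[OF finD aD, of "\<lambda>d. c d *\<^sub>R d"] by simp
    finally have "(\<Sum>d\<in>D. c' d *\<^sub>R d) = u b - a" using c(2) by simp
    then have "root_le D a (u b)" unfolding root_le_def nonneg_int_comb_def using c'N by metis
    then show ?thesis using aD uaP by blast
  qed
  have all: "\<exists>b\<in>D. u b \<in> P \<and> u b \<in> nu R D u k" for k
  proof (induction k)
    case 0
    obtain b where b: "b \<in> D" "u b \<in> P" using Y by blast
    then have "u b \<in> u ` P" using D_pos by blast
    then show ?case using b by auto
  next
    case (Suc k)
    then obtain b where b: "b \<in> D" "u b \<in> P" "u b \<in> nu R D u k" by blast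
    obtain a where a: "a \<in> D" "u a \<in> P" "root_le D a (u b)" using step[OF b(1,2)] by blast
    have "a \<in> Adj R D (nu R D u k)" unfolding Adj_def using D_pos[OF a(1)] a(3) b(3) by blast
    then have "u a \<in> nu R D u (Suc k)" using a(2) by simp
    then show ?case using a by blast
  qed
  from rat obtain k where "nu R D u k = {}" unfolding rational_def by blast
  then show False using all[of k] by blast
qed

end

theorem lemma4:
  fixes R D :: "'a::euclidean_space set" and u w0 :: "'a \<Rightarrow> 'a"
  assumes "root_system R" and "is_base R D"
    and "longest_element R D w0"
    and "u \<in> weyl_group R"
    and "rational R D u"
    and "u \<noteq> w0"
  shows "\<exists>a\<in>D. inv u a \<in> pos_roots R D \<and> u a \<in> uminus ` pos_roots R D"
proof -
  interpret rs R D using assms(1,2) by unfold_locales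
  show ?thesis using main[OF assms(3-6)] .
qed

end
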